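(* Let $f:\mathbb{R}^d\to\mathbb{R}$ be twice differentiable with $L$-Lipschitz Hessian. Let $x,g\in\mathbb{R}^d$, let $H\in\mathbb{R}^{d\times d}$ be symmetric, let $M\ge L$, and let $x^+$ be a global minimizer of $y\mapsto \Omega_{M,g,H}(y,x)$. Then $$ f(x)-f(x^+)\;\ge\;\frac{1}{1008\sqrt{M}}\,\mu_M(x^+)+\frac{M\|x-x^+\|^3}{72}-\frac{4\|\nabla f(x)-g\|^{3/2}}{\sqrt{M}}-\frac{73\|\nabla^2 f(x)-H\|^3}{M^2}. $$
   Context: $\|\cdot\|$ is the Euclidean norm on vectors and the spectral norm $\|H\|=\max\{\lambda_{\max}(H),-\lambda_{\min}(H)\}$ on symmetric matrices. The Hessian of $f$ is $L$-Lipschitz means $\|\nabla^2 f(x)-\nabla^2 f(y)\|\le L\|x-y\|$ for all $x,y\in\mathbb{R}^d$. For $M>0$, $g\in\mathbb{R}^d$ and symmetric $H$, $\Omega_{M,g,H}(y,x):=\langle g,y-x\rangle+\frac12\langle H(y-x),y-x\rangle+\frac{M}{6}\|y-x\|^3$. For $c>0$, $\mu_c(x):=\max\Bigl\{\|\nabla f(x)\|^{3/2},\ \frac{(-\lambda_{\min}(\nabla^2 f(x)))^3}{c^{3/2}}\Bigr\}$. *)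

theory Defs
  imports "HOL-Analysis.Analysis"
begin

definition eigenvalues :: "real^'n^'n \<Rightarrow> real set" where
  "eigenvalues A = {l. \<exists>v. v \<noteq> 0 \<and> A *v v = l *\<^sub>R v}"

definition lambda_min :: "real^'n^'n \<Rightarrow> real" where
  "lambda_min A = Min (eigenvalues A)"

definition lambda_max :: "real^'n^'n \<Rightarrow> real" where
  "lambda_max A = Max (eigenvalues A)"

definition symmetric_matrix :: "real^'n^'n \<Rightarrow> bool" where
  "symmetric_matrix A \<longleftrightarrow> transpose A = A"

definition spec_norm :: "real^'n^'n \<Rightarrow> real" where
  "spec_norm A = max (lambda_max A) (- lambda_min A)"

definition Omega :: "real \<Rightarrow> real^'n \<Rightarrow> real^'n^'n \<Rightarrow> real^'n \<Rightarrow> real^'n \<Rightarrow> real" where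
  "Omega M g H y x = g \<bullet> (y - x) + (1/2) * ((H *v (y - x)) \<bullet> (y - x)) + (M / 6) * norm (y - x) ^ 3"

definition mu :: "(real^'n \<Rightarrow> real^'n) \<Rightarrow> (real^'n \<Rightarrow> real^'n^'n) \<Rightarrow> real \<Rightarrow> real^'n \<Rightarrow> real" where
  "mu gradf Hf c x = max (norm (gradf x) powr (3/2)) ((- lambda_min (Hf x)) ^ 3 / c powr (3/2))"

end

theory Submission
  imports Defs
begin


lemma sym_inner:
  fixes A :: "real^'n^'n"
  assumes "symmetric_matrix A"
  shows "(A *v u) \<bullet> w = u \<bullet> (A *v w)"
proof -
  have "(A *v u) \<bullet> w = (u v* transpose A) \<bullet> w" by simp
  also have "\<dots> = u \<bullet> (transpose A *v w)" by (rule dot_lmul_matrix)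
  also have "\<dots> = u \<bullet> (A *v w)" using assms by (simp add: symmetric_matrix_def)
  finally show ?thesis .
qed

lemma sym_diff: "symmetric_matrix A \<Longrightarrow> symmetric_matrix B \<Longrightarrow> symmetric_matrix (A - B)"
  by (simp add: symmetric_matrix_def transpose_def vec_eq_iff)

lemma sym_uminus: "symmetric_matrix A \<Longrightarrow> symmetric_matrix (- A)"
  by (simp add: symmetric_matrix_def transpose_def vec_eq_iff)

lemma quad_scale:
  fixes A :: "real^'n^'n"
  shows "(c *\<^sub>R w) \<bullet> (A *v (c *\<^sub>R w)) = c^2 * (w \<bullet> (A *v w))"
  by (simp add: matrix_vector_mult_scaleR power2_eq_square)

lemma sym_max_eig:
  fixes A :: "real^'n^'n"
  assumes sym: "symmetric_matrix A"
  shows "\<exists>v. norm v = 1 \<and> A *v v = (v \<bullet> (A *v v)) *\<^sub>R v \<and>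
             (\<forall>w. w \<bullet> (A *v w) \<le> (v \<bullet> (A *v v)) * (norm w)^2)"
proof -
  have cont: "continuous_on (sphere 0 1) (\<lambda>y::real^'n. y \<bullet> (A *v y))"
    by (intro continuous_intros linear_continuous_on matrix_vector_mul_linear)
  obtain v where v: "v \<in> sphere 0 1" and vmax: "\<And>y. y \<in> sphere 0 1 \<Longrightarrow> y \<bullet> (A *v y) \<le> v \<bullet> (A *v v)"
    using continuous_attains_sup[OF compact_sphere _ cont] by auto
  define l where "l = v \<bullet> (A *v v)"
  have nv: "norm v = 1" using v by simp
  have bnd: "w \<bullet> (A *v w) \<le> l * (norm w)^2" for w
  proof (cases "w = 0")
    case True then show ?thesis by simp
  next
    case False
    let ?u = "(1 / norm w) *\<^sub>R w"
    have "?u \<in> sphere 0 1" using False by simp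
    then have "?u \<bullet> (A *v ?u) \<le> l" using vmax l_def by blast
    then have "(1/norm w)^2 * (w \<bullet> (A *v w)) \<le> l" by (simp only: quad_scale)
    then show ?thesis using False by (simp add: field_simps power2_eq_square)
  qed
  define b where "b = A *v v - l *\<^sub>R v"
  define c where "c = b \<bullet> (A *v b) - l * (norm b)^2"
  have c0: "c \<le> 0" using bnd[of b] c_def by simp
  have key: "2 * t * (norm b)^2 + t^2 * c \<le> 0" for t
  proof -
    define X where "X = b \<bullet> (A *v v)"
    define Y where "Y = b \<bullet> (A *v b)"
    define B where "B = b \<bullet> v"
    define N where "N = (norm b)^2"
    have f0: "(v + t *\<^sub>R b) \<bullet> (A *v (v + t *\<^sub>R b)) \<le> l * (norm (v + t *\<^sub>R b))^2" by (rule bnd)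
    have e1: "(v + t *\<^sub>R b) \<bullet> (A *v (v + t *\<^sub>R b)) = l + 2 * t * X + t^2 * Y"
      using sym_inner[OF sym, of b v] l_def unfolding X_def Y_def
      by (simp add: algebra_simps inner_add_left inner_add_right power2_eq_square inner_commute)
    have e2: "(norm (v + t *\<^sub>R b))^2 = 1 + 2 * t * B + t^2 * N"
    proof -
      have vv: "v \<bullet> v = 1" using nv by (metis norm_eq_1)
      show ?thesis unfolding power2_norm_eq_inner B_def N_def
        using vv by (simp add: algebra_simps inner_commute power2_eq_square)
    qed
    have e3: "N = X - l * B"
      by (simp add: N_def X_def B_def b_def power2_norm_eq_inner inner_diff_right inner_commute algebra_simps)
    have f1: "l + 2 * t * X + t^2 * Y \<le> l * (1 + 2 * t * B + t^2 * N)" using f0 e1 e2 by simp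
    have f2: "l * (1 + 2 * t * B + t^2 * N) = l + 2 * t * (l * B) + t^2 * (l * N)" by (simp add: algebra_simps)
    have f3: "t^2 * c = t^2 * Y - t^2 * (l * N)" unfolding c_def Y_def N_def by (simp add: algebra_simps)
    have f4: "2 * t * N = 2 * t * X - 2 * t * (l * B)" unfolding e3 by (simp add: algebra_simps)
    show ?thesis using f1 f2 f3 f4 unfolding N_def by linarith
  qed
  have "b = 0"
  proof (rule ccontr)
    assume "b \<noteq> 0"
    then have nb: "(norm b)^2 > 0" by simp
    define t where "t = (norm b)^2 / (1 - c)"
    have t0: "t > 0" using nb c0 unfolding t_def by simp
    have "2 * t * (norm b)^2 + t^2 * c \<le> 0" by (rule key)
    then have "t * (2 * (norm b)^2 + t * c) \<le> 0" by (simp add: algebra_simps power2_eq_square)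
    then have h: "2 * (norm b)^2 + t * c \<le> 0" using t0 by (simp add: mult_le_0_iff)
    have "- ((norm b)^2) \<le> t * c"
    proof -
      have "t * c = (norm b)^2 * (c / (1 - c))" unfolding t_def by simp
      moreover have "c / (1 - c) \<ge> -1" using c0 by (simp add: field_simps)
      ultimately show ?thesis using nb
        by (metis mult.right_neutral mult_left_mono mult_minus_right less_imp_le)
    qed
    then show False using h nb by linarith
  qed
  then show ?thesis using nv bnd by (intro exI[of _ v]) (simp add: b_def l_def)
qed

lemma eig_finite:
  fixes A :: "real^'n^'n"
  assumes sym: "symmetric_matrix A"
  shows "finite (eigenvalues A)"
proof -
  define ev where "ev l = (SOME v. v \<noteq> 0 \<and> A *v v = l *\<^sub>R v)" for l
  have ev: "ev l \<noteq> 0 \<and> A *v ev l = l *\<^sub>R ev l" if "l \<in> eigenvalues A" for l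
    using that unfolding eigenvalues_def ev_def by (rule CollectE) (rule someI_ex)
  have orth: "ev l \<bullet> ev l' = 0" if "l \<in> eigenvalues A" "l' \<in> eigenvalues A" "l \<noteq> l'" for l l'
  proof -
    have "l * (ev l \<bullet> ev l') = (A *v ev l) \<bullet> ev l'" using ev[OF that(1)] by simp
    also have "\<dots> = ev l \<bullet> (A *v ev l')" by (rule sym_inner[OF sym])
    also have "\<dots> = l' * (ev l \<bullet> ev l')" using ev[OF that(2)] by simp
    finally show ?thesis using that(3) by simp
  qed
  have inj: "inj_on ev (eigenvalues A)"
  proof (rule inj_onI)
    fix l l' assume a: "l \<in> eigenvalues A" "l' \<in> eigenvalues A" "ev l = ev l'"
    show "l = l'"
    proof (rule ccontr)
      assume "l \<noteq> l'"
      then have "ev l \<bullet> ev l = 0" using orth[OF a(1,2)] a(3) by simp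
      then show False using ev[OF a(1)] by simp
    qed
  qed
  have "pairwise orthogonal (ev ` eigenvalues A)"
    unfolding pairwise_def orthogonal_def using orth by auto
  moreover have "0 \<notin> ev ` eigenvalues A" using ev by auto
  ultimately have "independent (ev ` eigenvalues A)" by (rule pairwise_orthogonal_independent)
  then have "finite (ev ` eigenvalues A)" using independent_bound by blast
  then show ?thesis using inj finite_imageD by blast
qed

lemma eig_props:
  fixes A :: "real^'n^'n"
  assumes sym: "symmetric_matrix A"
  shows "finite (eigenvalues A)" "eigenvalues A \<noteq> {}"
    "lambda_min A \<in> eigenvalues A" "lambda_max A \<in> eigenvalues A"
    "lambda_min A * (norm w)^2 \<le> w \<bullet> (A *v w)" "w \<bullet> (A *v w) \<le> lambda_max A * (norm w)^2"
    "lambda_min A \<le> lambda_max A"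
proof -
  show fin: "finite (eigenvalues A)" by (rule eig_finite[OF sym])
  obtain v where v: "norm v = 1" "A *v v = (v \<bullet> (A *v v)) *\<^sub>R v"
     "\<And>w. w \<bullet> (A *v w) \<le> (v \<bullet> (A *v v)) * (norm w)^2"
    using sym_max_eig[OF sym] by blast
  have vE: "v \<bullet> (A *v v) \<in> eigenvalues A" unfolding eigenvalues_def using v(1,2)
    by (intro CollectI exI[of _ v]) auto
  then show ne: "eigenvalues A \<noteq> {}" by auto
  show "lambda_min A \<in> eigenvalues A" unfolding lambda_min_def using fin ne by (rule Min_in)
  show "lambda_max A \<in> eigenvalues A" unfolding lambda_max_def using fin ne by (rule Max_in)
  have "v \<bullet> (A *v v) \<le> lambda_max A" unfolding lambda_max_def using fin vE by (rule Max_ge)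
  then show "w \<bullet> (A *v w) \<le> lambda_max A * (norm w)^2"
    using v(3)[of w] by (meson mult_right_mono order_trans zero_le_power2)
  obtain u where u: "norm u = 1" "(- A) *v u = (u \<bullet> ((- A) *v u)) *\<^sub>R u"
     "\<And>w. w \<bullet> ((- A) *v w) \<le> (u \<bullet> ((- A) *v u)) * (norm w)^2"
    using sym_max_eig[OF sym_uminus[OF sym]] by blast
  have negA: "(- A) *v w = - (A *v w)" for w :: "real^'n"
    by (simp add: matrix_vector_mult_def vec_eq_iff sum_negf)
  have uE: "u \<bullet> (A *v u) \<in> eigenvalues A" unfolding eigenvalues_def using u(1,2)
    by (intro CollectI exI[of _ u]) (auto simp: negA)
  have "lambda_min A \<le> u \<bullet> (A *v u)" unfolding lambda_min_def using fin uE by (rule Min_le)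
  moreover have "(u \<bullet> (A *v u)) * (norm w)^2 \<le> w \<bullet> (A *v w)" using u(3)[of w] by (simp add: negA)
  ultimately show "lambda_min A * (norm w)^2 \<le> w \<bullet> (A *v w)"
    by (meson mult_right_mono order_trans zero_le_power2)
  show "lambda_min A \<le> lambda_max A" unfolding lambda_min_def lambda_max_def
    using fin ne by (meson Max_ge Min_in order_trans Min_le Max_in)
qed

lemma spec_nonneg:
  fixes A :: "real^'n^'n"
  assumes "symmetric_matrix A" shows "0 \<le> spec_norm A"
  using eig_props(7)[OF assms] unfolding spec_norm_def by linarith

lemma quad_abs:
  fixes A :: "real^'n^'n"
  assumes sym: "symmetric_matrix A"
  shows "\<bar>w \<bullet> (A *v w)\<bar> \<le> spec_norm A * (norm w)^2"
proof -
  have "lambda_max A \<le> spec_norm A" "- lambda_min A \<le> spec_norm A" unfolding spec_norm_def by auto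
  then have "lambda_max A * (norm w)^2 \<le> spec_norm A * (norm w)^2"
     "(- lambda_min A) * (norm w)^2 \<le> spec_norm A * (norm w)^2"
    by (intro mult_right_mono; simp)+
  then show ?thesis using eig_props(5,6)[OF sym, of w] by auto
qed

lemma op_bound:
  fixes A :: "real^'n^'n"
  assumes sym: "symmetric_matrix A"
  shows "norm (A *v u) \<le> spec_norm A * norm u"
proof (cases "A *v u = 0")
  case True then show ?thesis using spec_nonneg[OF sym] by simp
next
  case False
  define S where "S = spec_norm A"
  define w where "w = (norm u / norm (A *v u)) *\<^sub>R (A *v u)"
  have nw: "norm w = norm u" using False unfolding w_def by simp
  have pol: "4 * ((A *v u) \<bullet> w) = (u + w) \<bullet> (A *v (u + w)) - (u - w) \<bullet> (A *v (u - w))"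
    using sym_inner[OF sym, of w u] sym_inner[OF sym, of u w]
    by (simp add: algebra_simps inner_add_left inner_add_right inner_diff_left inner_diff_right inner_commute)
  have "(u + w) \<bullet> (A *v (u + w)) \<le> S * (norm (u + w))^2" using abs_le_D1[OF quad_abs[OF sym, of "u+w"]] S_def by simp
  moreover have "- ((u - w) \<bullet> (A *v (u - w))) \<le> S * (norm (u - w))^2" using abs_le_D2[OF quad_abs[OF sym, of "u-w"]] S_def by simp
  moreover have "(norm (u + w))^2 + (norm (u - w))^2 = 2 * (norm u)^2 + 2 * (norm w)^2"
    unfolding power2_norm_eq_inner by (simp add: algebra_simps inner_add_left inner_add_right inner_diff_left inner_diff_right inner_commute)
  ultimately have "4 * ((A *v u) \<bullet> w) \<le> 4 * S * (norm u)^2"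
  proof -
    assume a1: "(u + w) \<bullet> (A *v (u + w)) \<le> S * (norm (u + w))^2"
      and a2: "- ((u - w) \<bullet> (A *v (u - w))) \<le> S * (norm (u - w))^2"
      and a3: "(norm (u + w))^2 + (norm (u - w))^2 = 2 * (norm u)^2 + 2 * (norm w)^2"
    have "S * (norm (u + w))^2 + S * (norm (u - w))^2 = S * ((norm (u + w))^2 + (norm (u - w))^2)"
      by (simp add: distrib_left)
    also have "\<dots> = 4 * S * (norm u)^2" using a3 nw by simp
    finally show ?thesis using a1 a2 pol by linarith
  qed
  moreover have "(A *v u) \<bullet> w = norm u * norm (A *v u)" using False unfolding w_def
    by (simp add: power2_norm_eq_inner[symmetric] power2_eq_square)
  ultimately have "norm u * norm (A *v u) \<le> S * norm u * norm u" by (simp add: power2_eq_square)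
  moreover have "norm u > 0" using False by auto
  ultimately show ?thesis unfolding S_def by (simp add: mult.commute)
qed



lemma line_deriv:
  fixes F :: "real^'n \<Rightarrow> real"
  assumes "(F has_derivative F') (at (p + t *\<^sub>R w))"
  shows "((\<lambda>s. F (p + s *\<^sub>R w)) has_real_derivative F' w) (at t)"
proof -
  have bl: "bounded_linear F'" using assms has_derivative_bounded_linear by blast
  have d1: "((\<lambda>s. p + s *\<^sub>R w) has_derivative (\<lambda>s. s *\<^sub>R w)) (at t)"
    by (auto intro!: derivative_eq_intros)
  have "((\<lambda>s. F (p + s *\<^sub>R w)) has_derivative (\<lambda>s. F' (s *\<^sub>R w))) (at t)"
    using has_derivative_compose[OF d1 assms] by (simp add: o_def)
  moreover have "(\<lambda>s. F' (s *\<^sub>R w)) = (*) (F' w)"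
    using linear_scale[OF bounded_linear.linear[OF bl]] by (auto simp: fun_eq_iff mult.commute)
  ultimately show ?thesis unfolding has_field_derivative_def by simp
qed

lemma two_sided_bound:
  fixes G G' :: "real \<Rightarrow> real"
  assumes "s \<ge> 0" and der: "\<And>t. t \<in> {0..s} \<Longrightarrow> (G has_real_derivative G' t) (at t)"
    and bnd: "\<And>t. t \<in> {0..s} \<Longrightarrow> \<bar>G' t - c\<bar> \<le> B"
  shows "\<bar>G s - G 0 - s * c\<bar> \<le> s * B"
proof -
  have "(\<lambda>t. G t - t * (c + B)) s \<le> (\<lambda>t. G t - t * (c + B)) 0"
  proof (rule deriv_nonpos_imp_antimono[where g="\<lambda>t. G t - t * (c + B)" and g'="\<lambda>t. G' t - (c + B)" and a=0 and b=s])
    fix t :: real assume t: "t \<in> {0..s}"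
    show "((\<lambda>t. G t - t * (c + B)) has_real_derivative G' t - (c + B)) (at t)"
      using der[OF t] by (auto intro!: derivative_eq_intros)
    show "G' t - (c + B) \<le> 0" using bnd[OF t] by (simp add: abs_le_iff)
  qed (use assms(1) in auto)
  moreover have "(\<lambda>t. t * (c - B) - G t) s \<le> (\<lambda>t. t * (c - B) - G t) 0"
  proof (rule deriv_nonpos_imp_antimono[where g="\<lambda>t. t * (c - B) - G t" and g'="\<lambda>t. (c - B) - G' t" and a=0 and b=s])
    fix t :: real assume t: "t \<in> {0..s}"
    show "((\<lambda>t. t * (c - B) - G t) has_real_derivative (c - B) - G' t) (at t)"
      using der[OF t] by (auto intro!: derivative_eq_intros)
    show "(c - B) - G' t \<le> 0" using bnd[OF t] by (simp add: abs_le_iff)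
  qed (use assms(1) in auto)
  ultimately show ?thesis by (simp add: algebra_simps abs_le_iff)
qed



lemma small_eq0:
  fixes a C :: real
  assumes "C \<ge> 0" "\<And>e. e > 0 \<Longrightarrow> \<bar>a\<bar> \<le> e * C"
  shows "a = 0"
proof (rule ccontr)
  assume "a \<noteq> 0"
  then have pa: "\<bar>a\<bar> > 0" by simp
  define e where "e = \<bar>a\<bar> / (2 * (C + 1))"
  have e0: "e > 0" using pa assms(1) unfolding e_def by simp
  have "\<bar>a\<bar> \<le> e * C" by (rule assms(2)[OF e0])
  also have "e * C = \<bar>a\<bar> * (C / (2 * (C + 1)))" unfolding e_def by simp
  also have "\<dots> < \<bar>a\<bar> * 1"
    using pa assms(1) by (intro mult_strict_left_mono) (auto simp: field_simps)
  finally show False by simp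
qed

lemma hess_half:
  fixes f :: "real^'n \<Rightarrow> real" and gradf :: "real^'n \<Rightarrow> real^'n" and A :: "real^'n^'n"
  assumes f_deriv: "\<And>y. (f has_derivative (\<lambda>h. gradf y \<bullet> h)) (at y)"
    and dlt: "\<And>y. norm (y - x) < d \<Longrightarrow> norm (gradf y - gradf x - A *v (y - x)) \<le> e * norm (y - x)"
    and s0: "s > 0" and sd: "s * (norm u + norm v) < d" and e0: "e \<ge> 0"
  shows "\<bar>f (x + s *\<^sub>R v + s *\<^sub>R u) - f (x + s *\<^sub>R u) - f (x + s *\<^sub>R v) + f x - s * (s * ((A *v v) \<bullet> u))\<bar>
          \<le> s * (2 * e * s * (norm u + norm v) * norm u)"
proof -
  define G where "G t = f ((x + s *\<^sub>R v) + t *\<^sub>R u) - f (x + t *\<^sub>R u)" for t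
  define G' where "G' t = (gradf ((x + s *\<^sub>R v) + t *\<^sub>R u) - gradf (x + t *\<^sub>R u)) \<bullet> u" for t
  have der: "(G has_real_derivative G' t) (at t)" for t
  proof -
    have "((\<lambda>t. f ((x + s *\<^sub>R v) + t *\<^sub>R u) - f (x + t *\<^sub>R u)) has_real_derivative
          gradf ((x + s *\<^sub>R v) + t *\<^sub>R u) \<bullet> u - gradf (x + t *\<^sub>R u) \<bullet> u) (at t)"
      by (intro DERIV_diff line_deriv f_deriv)
    then show ?thesis unfolding G_def G'_def by (simp add: inner_diff_left)
  qed
  have bnd: "\<bar>G' t - s * ((A *v v) \<bullet> u)\<bar> \<le> 2 * e * s * (norm u + norm v) * norm u" if t: "t \<in> {0..s}" for t
  proof -
    define y1 where "y1 = (x + s *\<^sub>R v) + t *\<^sub>R u"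
    define y2 where "y2 = x + t *\<^sub>R u"
    define e1 where "e1 = gradf y1 - gradf x - A *v (y1 - x)"
    define e2 where "e2 = gradf y2 - gradf x - A *v (y2 - x)"
    have n1: "norm (y1 - x) \<le> s * (norm u + norm v)"
    proof -
      have "norm (y1 - x) = norm (s *\<^sub>R v + t *\<^sub>R u)" unfolding y1_def by (simp add: algebra_simps)
      also have "\<dots> \<le> s * norm v + t * norm u" using t s0 by (auto intro: order_trans[OF norm_triangle_ineq])
      also have "\<dots> \<le> s * norm v + s * norm u" using t by (auto intro: mult_right_mono)
      finally show ?thesis by (simp add: algebra_simps)
    qed
    have n2: "norm (y2 - x) \<le> s * (norm u + norm v)"
    proof -
      have "norm (y2 - x) = t * norm u" unfolding y2_def using t by simp
      also have "\<dots> \<le> s * norm u" using t by (auto intro: mult_right_mono)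
      also have "\<dots> \<le> s * (norm u + norm v)" using s0 by (simp add: algebra_simps)
      finally show ?thesis .
    qed
    have b1: "norm e1 \<le> e * (s * (norm u + norm v))"
      unfolding e1_def using dlt[of y1] n1 sd e0 by (meson le_less_trans mult_left_mono order_trans)
    have b2: "norm e2 \<le> e * (s * (norm u + norm v))"
      unfolding e2_def using dlt[of y2] n2 sd e0 by (meson le_less_trans mult_left_mono order_trans)
    have "gradf y1 - gradf y2 = s *\<^sub>R (A *v v) + (e1 - e2)"
      unfolding e1_def e2_def y1_def y2_def by (simp add: algebra_simps)
    then have "G' t - s * ((A *v v) \<bullet> u) = (e1 - e2) \<bullet> u"
      unfolding G'_def y1_def[symmetric] y2_def[symmetric] by (simp add: inner_add_left)
    then have "\<bar>G' t - s * ((A *v v) \<bullet> u)\<bar> \<le> norm (e1 - e2) * norm u"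
      by (simp add: Cauchy_Schwarz_ineq2)
    also have "\<dots> \<le> (norm e1 + norm e2) * norm u" by (simp add: mult_right_mono norm_triangle_ineq4)
    also have "\<dots> \<le> (2 * e * s * (norm u + norm v)) * norm u"
      using b1 b2 by (intro mult_right_mono) auto
    finally show ?thesis .
  qed
  have "\<bar>G s - G 0 - s * (s * ((A *v v) \<bullet> u))\<bar> \<le> s * (2 * e * s * (norm u + norm v) * norm u)"
    by (rule two_sided_bound[OF _ der bnd]) (use s0 in auto)
  then show ?thesis unfolding G_def by (simp add: algebra_simps)
qed

lemma hess_sym:
  fixes f :: "real^'n \<Rightarrow> real" and gradf :: "real^'n \<Rightarrow> real^'n" and Hf :: "real^'n \<Rightarrow> real^'n^'n"
  assumes f_deriv: "\<And>y. (f has_derivative (\<lambda>h. gradf y \<bullet> h)) (at y)"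
    and grad_deriv: "\<And>y. (gradf has_derivative (\<lambda>h. Hf y *v h)) (at y)"
  shows "symmetric_matrix (Hf x)"
proof -
  define A where "A = Hf x"
  have key: "(A *v v) \<bullet> u = (A *v u) \<bullet> v" for u v
  proof -
    define K where "K = norm u + norm v"
    have "(A *v v) \<bullet> u - (A *v u) \<bullet> v = 0"
    proof (rule small_eq0[where C="2 * K^2"])
      fix e :: real assume e0: "e > 0"
      obtain d where d0: "d > 0" and
        dlt: "\<And>y. norm (y - x) < d \<Longrightarrow> norm (gradf y - gradf x - A *v (y - x)) \<le> e * norm (y - x)"
        using grad_deriv[of x] e0 unfolding has_derivative_at_alt A_def by blast
      define s where "s = d / (2 * (K + 1))"
      have K0: "K \<ge> 0" unfolding K_def by simp
      have s0: "s > 0" unfolding s_def using d0 K0 by simp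
      have sK: "s * K < d"
      proof -
        have "s * K = d * (K / (2 * (K + 1)))" unfolding s_def by simp
        also have "\<dots> < d * 1" using d0 K0 by (intro mult_strict_left_mono) (auto simp: field_simps)
        finally show ?thesis by simp
      qed
      have h1: "\<bar>f (x + s *\<^sub>R v + s *\<^sub>R u) - f (x + s *\<^sub>R u) - f (x + s *\<^sub>R v) + f x - s * (s * ((A *v v) \<bullet> u))\<bar>
          \<le> s * (2 * e * s * K * norm u)"
        using hess_half[OF f_deriv dlt s0 _ less_imp_le[OF e0], where u=u and v=v] sK unfolding K_def by simp
      have h2: "\<bar>f (x + s *\<^sub>R u + s *\<^sub>R v) - f (x + s *\<^sub>R v) - f (x + s *\<^sub>R u) + f x - s * (s * ((A *v u) \<bullet> v))\<bar>
          \<le> s * (2 * e * s * K * norm v)"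
        using hess_half[OF f_deriv dlt s0 _ less_imp_le[OF e0], where u=v and v=u] sK unfolding K_def by (simp add: add.commute)
      have eqx: "x + s *\<^sub>R u + s *\<^sub>R v = x + s *\<^sub>R v + s *\<^sub>R u" by (simp add: algebra_simps)
      have "\<bar>(s * s) * ((A *v v) \<bullet> u - (A *v u) \<bullet> v)\<bar> \<le> s * (2 * e * s * K * norm u) + s * (2 * e * s * K * norm v)"
        using h1 h2 unfolding eqx by (simp add: algebra_simps abs_le_iff) 
      also have "\<dots> = (s * s) * (e * (2 * K^2))" unfolding K_def by (simp add: algebra_simps power2_eq_square)
      finally have "(s * s) * \<bar>(A *v v) \<bullet> u - (A *v u) \<bullet> v\<bar> \<le> (s * s) * (e * (2 * K^2))"
        using s0 by (simp add: abs_mult)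
      then show "\<bar>(A *v v) \<bullet> u - (A *v u) \<bullet> v\<bar> \<le> e * (2 * K^2)" using s0 by simp
    qed simp
    then show ?thesis by simp
  qed
  have "transpose A = A"
  proof -
    have "A $ j $ i = A $ i $ j" for i j
      using key[of "axis j 1" "axis i 1"]
      by (simp add: matrix_vector_mult_basis column_def inner_axis inner_axis')
    then show ?thesis by (simp add: transpose_def vec_eq_iff)
  qed
  then show ?thesis unfolding symmetric_matrix_def A_def .
qed



lemma L_nonneg:
  fixes Hf :: "real^'n \<Rightarrow> real^'n^'n"
  assumes sym: "\<And>y. symmetric_matrix (Hf y)"
    and hess_lip: "\<And>y z. spec_norm (Hf y - Hf z) \<le> L * norm (y - z)"
  shows "L \<ge> 0"
proof -
  obtain i :: 'n where True by simp
  have "0 \<le> spec_norm (Hf (axis i 1) - Hf 0)" by (rule spec_nonneg[OF sym_diff[OF sym sym]])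
  also have "\<dots> \<le> L * norm (axis i (1::real) - 0)" by (rule hess_lip)
  finally show ?thesis by simp
qed

lemma lip_op:
  fixes Hf :: "real^'n \<Rightarrow> real^'n^'n"
  assumes sym: "\<And>y. symmetric_matrix (Hf y)"
    and hess_lip: "\<And>y z. spec_norm (Hf y - Hf z) \<le> L * norm (y - z)"
  shows "norm ((Hf y - Hf z) *v v) \<le> L * norm (y - z) * norm v"
proof -
  have "norm ((Hf y - Hf z) *v v) \<le> spec_norm (Hf y - Hf z) * norm v" by (rule op_bound[OF sym_diff[OF sym sym]])
  also have "\<dots> \<le> L * norm (y - z) * norm v" using hess_lip[of y z] by (simp add: mult_right_mono)
  finally show ?thesis .
qed

lemma taylor_grad:
  fixes f :: "real^'n \<Rightarrow> real" and gradf :: "real^'n \<Rightarrow> real^'n" and Hf :: "real^'n \<Rightarrow> real^'n^'n"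
  assumes grad_deriv: "\<And>y. (gradf has_derivative (\<lambda>h. Hf y *v h)) (at y)"
    and sym: "\<And>y. symmetric_matrix (Hf y)"
    and hess_lip: "\<And>y z. spec_norm (Hf y - Hf z) \<le> L * norm (y - z)"
  shows "norm (gradf (x + h) - gradf x - Hf x *v h) \<le> L / 2 * (norm h)^2"
proof -
  have L0: "L \<ge> 0" by (rule L_nonneg[OF sym hess_lip])
  define D where "D = gradf (x + h) - gradf x - Hf x *v h"
  define C where "C = norm D * L * (norm h)^2"
  define g where "g t = D \<bullet> gradf (x + t *\<^sub>R h) - t * (D \<bullet> (Hf x *v h)) - C * t^2 / 2" for t
  define g' where "g' t = D \<bullet> (Hf (x + t *\<^sub>R h) *v h) - D \<bullet> (Hf x *v h) - C * t" for t
  have "g 1 \<le> g 0"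
  proof (rule deriv_nonpos_imp_antimono[where g=g and g'=g' and a=0 and b=1])
    fix t :: real assume t: "t \<in> {0..1}"
    have d1: "((\<lambda>s. D \<bullet> gradf (x + s *\<^sub>R h)) has_real_derivative D \<bullet> (Hf (x + t *\<^sub>R h) *v h)) (at t)"
      by (rule line_deriv[where F="\<lambda>y. D \<bullet> gradf y"]) (intro has_derivative_inner_right grad_deriv)
    show "(g has_real_derivative g' t) (at t)" unfolding g_def[abs_def] g'_def
      by (auto intro!: derivative_eq_intros d1 simp: power2_eq_square)
    have "D \<bullet> (Hf (x + t *\<^sub>R h) *v h) - D \<bullet> (Hf x *v h) = D \<bullet> ((Hf (x + t *\<^sub>R h) - Hf x) *v h)"
      by (simp add: matrix_vector_mult_diff_rdistrib inner_diff_right)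
    also have "\<dots> \<le> norm D * norm ((Hf (x + t *\<^sub>R h) - Hf x) *v h)" by (rule norm_cauchy_schwarz)
    also have "\<dots> \<le> norm D * (L * norm (x + t *\<^sub>R h - x) * norm h)"
      by (intro mult_left_mono lip_op[OF sym hess_lip]) simp
    also have "\<dots> = C * t" using t unfolding C_def by (simp add: power2_eq_square)
    finally show "g' t \<le> 0" unfolding g'_def by simp
  qed simp
  then have "(norm D)^2 \<le> C / 2"
    unfolding g_def D_def by (simp add: power2_norm_eq_inner inner_diff_right algebra_simps)
  then have "norm D * norm D \<le> norm D * (L / 2 * (norm h)^2)" unfolding C_def by (simp add: power2_eq_square)
  then show ?thesis unfolding D_def[symmetric]
    using L0 by (cases "norm D = 0") (auto simp: mult_le_cancel_left)
qed

lemma taylor_f: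
  fixes f :: "real^'n \<Rightarrow> real" and gradf :: "real^'n \<Rightarrow> real^'n" and Hf :: "real^'n \<Rightarrow> real^'n^'n"
  assumes f_deriv: "\<And>y. (f has_derivative (\<lambda>h. gradf y \<bullet> h)) (at y)"
    and grad_deriv: "\<And>y. (gradf has_derivative (\<lambda>h. Hf y *v h)) (at y)"
    and sym: "\<And>y. symmetric_matrix (Hf y)"
    and hess_lip: "\<And>y z. spec_norm (Hf y - Hf z) \<le> L * norm (y - z)"
  shows "f (x + h) \<le> f x + gradf x \<bullet> h + 1/2 * (h \<bullet> (Hf x *v h)) + L / 6 * (norm h)^3"
proof -
  define g where "g t = f (x + t *\<^sub>R h) - t * (gradf x \<bullet> h) - t^2 / 2 * (h \<bullet> (Hf x *v h)) - L * t^3 * (norm h)^3 / 6" for t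
  define g' where "g' t = gradf (x + t *\<^sub>R h) \<bullet> h - gradf x \<bullet> h - t * (h \<bullet> (Hf x *v h)) - L * t^2 * (norm h)^3 / 2" for t
  have "g 1 \<le> g 0"
  proof (rule deriv_nonpos_imp_antimono[where g=g and g'=g' and a=0 and b=1])
    fix t :: real assume t: "t \<in> {0..1}"
    have d1: "((\<lambda>s. f (x + s *\<^sub>R h)) has_real_derivative gradf (x + t *\<^sub>R h) \<bullet> h) (at t)"
      by (rule line_deriv[where F=f]) (rule f_deriv)
    show "(g has_real_derivative g' t) (at t)" unfolding g_def[abs_def] g'_def
      by (auto intro!: derivative_eq_intros d1 simp: power2_eq_square power3_eq_cube algebra_simps)
    have "gradf (x + t *\<^sub>R h) \<bullet> h - gradf x \<bullet> h - t * (h \<bullet> (Hf x *v h))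
          = (gradf (x + t *\<^sub>R h) - gradf x - Hf x *v (t *\<^sub>R h)) \<bullet> h"
      by (simp add: inner_diff_left inner_diff_right matrix_vector_mult_scaleR inner_commute)
    also have "\<dots> \<le> norm (gradf (x + t *\<^sub>R h) - gradf x - Hf x *v (t *\<^sub>R h)) * norm h" by (rule norm_cauchy_schwarz)
    also have "\<dots> \<le> (L / 2 * (norm (t *\<^sub>R h))^2) * norm h"
      by (intro mult_right_mono taylor_grad[OF grad_deriv sym hess_lip]) simp
    also have "\<dots> = L * t^2 * (norm h)^3 / 2" using t by (simp add: power2_eq_square power3_eq_cube)
    finally show "g' t \<le> 0" unfolding g'_def by simp
  qed simp
  then show ?thesis unfolding g_def by simp
qed



lemma cube_deriv0:
  "((\<lambda>v::real^'n. norm v ^ 3) has_derivative (\<lambda>k. 3 * norm h * (h \<bullet> k))) (at h)"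
proof (cases "h = 0")
  case True
  have "((\<lambda>v::real^'n. norm v ^ 3) has_derivative (\<lambda>k. 0)) (at 0)"
    unfolding has_derivative_at_alt
  proof (intro conjI allI impI)
    show "bounded_linear (\<lambda>k::real^'n. 0::real)" by simp
    fix e :: real assume e: "e > 0"
    show "\<exists>d>0. \<forall>y::real^'n. norm (y - 0) < d \<longrightarrow> norm (norm y ^ 3 - norm (0::real^'n) ^ 3 - 0) \<le> e * norm (y - 0)"
    proof -
      have hlp: "norm y ^ 3 \<le> e * norm y" if y: "norm y < min 1 e" for y :: "real^'n"
      proof -
        have "norm y \<le> 1" using y by simp
        then have "norm y ^ 2 \<le> norm y * 1" unfolding power2_eq_square by (intro mult_left_mono) auto
        then have "norm y ^ 2 \<le> e" using y by simp
        then have "norm y ^ 2 * norm y \<le> e * norm y" by (simp add: mult_right_mono)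
        then show ?thesis by (simp add: power2_eq_square power3_eq_cube)
      qed
      show ?thesis using e hlp by (intro exI[of _ "min 1 e"]) auto
    qed
  qed
  then show ?thesis using True by simp
next
  case False
  have "((\<lambda>v::real^'n. norm v ^ 3) has_derivative (\<lambda>k. of_nat 3 * (k \<bullet> sgn h) * norm h ^ (3 - 1))) (at h)"
    by (rule has_derivative_power[OF has_derivative_norm[OF False]])
  moreover have "(\<lambda>k. of_nat 3 * (k \<bullet> sgn h) * norm h ^ (3 - 1)) = (\<lambda>k. 3 * norm h * (h \<bullet> k))"
    using False by (auto simp: fun_eq_iff sgn_div_norm inner_commute power2_eq_square)
  ultimately show ?thesis by simp
qed

lemma Hv_deriv: "((\<lambda>v. H *v v) has_derivative (\<lambda>k. H *v k)) F" for H :: "real^'n^'n"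
  using bounded_linear.has_derivative[OF matrix_vector_mul_bounded_linear[of H] has_derivative_ident] by simp

lemma quad_limit:
  fixes a b c :: real
  assumes "\<And>e. e \<noteq> 0 \<Longrightarrow> 0 \<le> c + 2 * e * b + e^2 * a"
  shows "0 \<le> c"
proof (rule ccontr)
  assume "\<not> 0 \<le> c"
  then have c0: "c < 0" by simp
  define e where "e = min 1 (- c / (2 * (2 * \<bar>b\<bar> + \<bar>a\<bar> + 1)))"
  have e0: "e > 0" using c0 unfolding e_def by (simp add: field_simps)
  have e1: "e \<le> 1" unfolding e_def by simp
  have e2: "e * (2 * \<bar>b\<bar> + \<bar>a\<bar> + 1) \<le> - c / 2"
  proof -
    have "e \<le> - c / (2 * (2 * \<bar>b\<bar> + \<bar>a\<bar> + 1))" unfolding e_def by simp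
    then have "e * (2 * \<bar>b\<bar> + \<bar>a\<bar> + 1) \<le> (- c / (2 * (2 * \<bar>b\<bar> + \<bar>a\<bar> + 1))) * (2 * \<bar>b\<bar> + \<bar>a\<bar> + 1)"
      by (rule mult_right_mono) simp
    also have "\<dots> = - c / 2" by (simp add: field_simps)
    finally show ?thesis .
  qed
  have "\<bar>2 * e * b + e^2 * a\<bar> \<le> e * (2 * \<bar>b\<bar> + \<bar>a\<bar>)"
  proof -
    have "\<bar>2 * e * b + e^2 * a\<bar> \<le> 2 * e * \<bar>b\<bar> + e^2 * \<bar>a\<bar>"
      using e0 by (auto simp: abs_mult intro!: order_trans[OF abs_triangle_ineq])
    also have "e^2 * \<bar>a\<bar> \<le> e * \<bar>a\<bar>" using e0 e1 by (simp add: power2_eq_square mult_right_mono)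
    finally show ?thesis by (simp add: algebra_simps)
  qed
  moreover have "e * (2 * \<bar>b\<bar> + \<bar>a\<bar>) \<le> e * (2 * \<bar>b\<bar> + \<bar>a\<bar> + 1)" using e0 by simp
  ultimately have "\<bar>2 * e * b + e^2 * a\<bar> \<le> - c / 2" using e2 by linarith
  moreover have "0 \<le> c + 2 * e * b + e^2 * a" using assms e0 by simp
  ultimately show False using c0 by (simp add: abs_le_iff)
qed

definition Psi :: "real \<Rightarrow> real^'n \<Rightarrow> real^'n^'n \<Rightarrow> real^'n \<Rightarrow> real" where
  "Psi M g H v = g \<bullet> v + (1/2) * ((H *v v) \<bullet> v) + (M / 6) * norm v ^ 3"

lemma Psi_deriv:
  "(Psi M g H has_derivative (\<lambda>k. g \<bullet> k + (1/2) * ((H *v h) \<bullet> k + (H *v k) \<bullet> h) + (M / 6) * (3 * norm h * (h \<bullet> k)))) (at h)"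
proof -
  have d1: "((\<lambda>v. g \<bullet> v) has_derivative (\<lambda>k. g \<bullet> k)) (at h)"
    by (rule has_derivative_inner_right[OF has_derivative_ident])
  have d2: "((\<lambda>v. (H *v v) \<bullet> v) has_derivative (\<lambda>k. (H *v h) \<bullet> k + (H *v k) \<bullet> h)) (at h)"
    by (rule has_derivative_inner[OF Hv_deriv has_derivative_ident])
  have d3: "((\<lambda>v. norm v ^ 3) has_derivative (\<lambda>k. 3 * norm h * (h \<bullet> k))) (at h)" by (rule cube_deriv0)
  show ?thesis unfolding Psi_def[abs_def]
    by (intro has_derivative_add has_derivative_mult_right d1 d2 d3)
qed

lemma opt_conds:
  fixes M :: real and g x xp :: "real^'n" and H :: "real^'n^'n"
  assumes H_sym: "symmetric_matrix H" and M_pos: "M > 0"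
    and xp_min: "\<And>y. Omega M g H xp x \<le> Omega M g H y x"
  shows "g + H *v (xp - x) + (M * norm (xp - x) / 2) *\<^sub>R (xp - x) = 0"
    and "0 \<le> z \<bullet> (H *v z) + (M * norm (xp - x) / 2) * (norm z)^2"
proof -
  define h where "h = xp - x"
  define r where "r = norm h"
  define \<tau> where "\<tau> = M * r / 2"
  have pmin: "Psi M g H h \<le> Psi M g H v" for v
    using xp_min[of "x + v"] unfolding h_def Omega_def Psi_def by simp
  define G where "G = g + H *v h + \<tau> *\<^sub>R h"
  have F1: "G = 0"
  proof -
    have zero: "g \<bullet> w + (1/2) * ((H *v h) \<bullet> w + (H *v w) \<bullet> h) + (M / 6) * (3 * norm h * (h \<bullet> w)) = 0" for w
    proof -
      have d: "((\<lambda>t. Psi M g H (h + t *\<^sub>R w)) has_real_derivative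
              (g \<bullet> w + (1/2) * ((H *v h) \<bullet> w + (H *v w) \<bullet> h) + (M / 6) * (3 * norm h * (h \<bullet> w)))) (at 0)"
        by (rule line_deriv[where F="Psi M g H"]) (use Psi_deriv[of M g H h] in simp)
      show ?thesis by (rule DERIV_local_min[OF d, of 1]) (simp_all add: pmin)
    qed
    have "G \<bullet> G = 0"
      using zero[of G] sym_inner[OF H_sym, of G h]
      unfolding G_def \<tau>_def r_def
      by (simp add: inner_add_left inner_commute algebra_simps)
    then show ?thesis by simp
  qed
  then show "g + H *v (xp - x) + (M * norm (xp - x) / 2) *\<^sub>R (xp - x) = 0"
    unfolding G_def \<tau>_def r_def h_def .
  have g_eq: "g = - (H *v h) - \<tau> *\<^sub>R h"
  proof -
    have "g = G - H *v h - \<tau> *\<^sub>R h" unfolding G_def by simp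
    then show ?thesis using F1 by simp
  qed
  define K where "K z = z \<bullet> (H *v z) + \<tau> * (norm z)^2" for z
  have F2: "0 \<le> K z" for z
  proof (cases "h = 0")
    case True
    then have g0: "g = 0" using g_eq by simp
    show ?thesis
    proof (rule ccontr)
      assume neg: "\<not> 0 \<le> K z"
      then have q: "z \<bullet> (H *v z) < 0" using True unfolding K_def \<tau>_def r_def by simp
      then have z0: "z \<noteq> 0" by auto
      define t where "t = - (z \<bullet> (H *v z)) / (M * norm z ^ 3)"
      have t0: "t > 0" using q z0 M_pos unfolding t_def by (intro divide_pos_pos) auto
      have "Psi M g H h \<le> Psi M g H (t *\<^sub>R z)" by (rule pmin)
      then have "0 \<le> t^2 / 2 * (z \<bullet> (H *v z)) + M / 6 * t^3 * norm z ^ 3"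
        using True g0 t0 unfolding Psi_def
        by (simp add: matrix_vector_mult_scaleR power2_eq_square power3_eq_cube algebra_simps inner_commute)
      also have "M / 6 * t^3 * norm z ^ 3 = t^2 / 6 * (t * (M * norm z ^ 3))" by (simp add: power2_eq_square power3_eq_cube)
      also have "t * (M * norm z ^ 3) = - (z \<bullet> (H *v z))" unfolding t_def using M_pos z0 by simp
      finally have "0 \<le> t^2 * (z \<bullet> (H *v z)) / 3" by (simp add: algebra_simps)
      moreover have "t^2 * (z \<bullet> (H *v z)) < 0" using t0 q by (simp add: mult_pos_neg)
      ultimately show False by simp
    qed
  next
    case hne: False
    have r0: "r > 0" using hne unfolding r_def by simp
    have good: "0 \<le> K z" if zh: "z \<bullet> h \<noteq> 0" for z
    proof -
      have z0: "z \<noteq> 0" using zh by auto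
      define s where "s = - 2 * (h \<bullet> z) / (norm z)^2"
      have sz: "s * (norm z)^2 = - 2 * (h \<bullet> z)" unfolding s_def using z0 by simp
      have s0: "s \<noteq> 0" using zh z0 unfolding s_def by (simp add: inner_commute)
      define v where "v = h + s *\<^sub>R z"
      have "(norm v)^2 = r^2 + s * (2 * (h \<bullet> z) + s * (norm z)^2)"
        unfolding v_def r_def power2_norm_eq_inner
        by (simp add: inner_add_left inner_add_right inner_commute algebra_simps power2_eq_square)
      then have "(norm v)^2 = r^2" using sz by simp
      then have nv: "norm v = r" unfolding r_def by (simp add: power2_eq_iff_nonneg)
      have "Psi M g H h \<le> Psi M g H v" by (rule pmin)
      moreover have "Psi M g H v - Psi M g H h = s * (g \<bullet> z) + s * ((H *v h) \<bullet> z) + s^2 / 2 * (z \<bullet> (H *v z))"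
        using nv sym_inner[OF H_sym, of z h] unfolding Psi_def v_def r_def
        by (simp add: inner_add_left inner_add_right inner_commute matrix_vector_mult_scaleR algebra_simps power2_eq_square)
      moreover have "s * (g \<bullet> z) + s * ((H *v h) \<bullet> z) = - \<tau> * s * (h \<bullet> z)"
        unfolding g_eq by (simp add: inner_diff_left inner_commute algebra_simps)
      moreover have "- \<tau> * s * (h \<bullet> z) = s^2 / 2 * (\<tau> * (norm z)^2)"
      proof -
        have "- \<tau> * s * (h \<bullet> z) = \<tau> * s * (s * (norm z)^2) / 2" using sz by simp
        then show ?thesis by (simp add: power2_eq_square algebra_simps)
      qed
      ultimately have "0 \<le> s^2 / 2 * K z" unfolding K_def by (simp add: algebra_simps)
      moreover have "s^2 / 2 > 0" using s0 by simp
      ultimately show ?thesis by (simp add: zero_le_mult_iff)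
    qed
    show ?thesis
    proof (cases "z \<bullet> h = 0")
      case False then show ?thesis by (rule good)
    next
      case zh: True
      show ?thesis
      proof (rule quad_limit[where b="(H *v z) \<bullet> h + \<tau> * (z \<bullet> h)" and a="K h"])
        fix e :: real assume e0: "e \<noteq> 0"
        have "(z + e *\<^sub>R h) \<bullet> h \<noteq> 0" using zh e0 hne by (simp add: inner_add_left)
        then have "0 \<le> K (z + e *\<^sub>R h)" by (rule good)
        also have "K (z + e *\<^sub>R h) = K z + 2 * e * ((H *v z) \<bullet> h + \<tau> * (z \<bullet> h)) + e^2 * K h"
          using sym_inner[OF H_sym, of h z] unfolding K_def power2_norm_eq_inner
          by (simp add: inner_add_left inner_add_right inner_commute matrix_vector_mult_scaleR algebra_simps power2_eq_square)
        finally show "0 \<le> K z + 2 * e * ((H *v z) \<bullet> h + \<tau> * (z \<bullet> h)) + e^2 * K h" .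
      qed
    qed
  qed
  then show "0 \<le> z \<bullet> (H *v z) + (M * norm (xp - x) / 2) * (norm z)^2"
    unfolding K_def \<tau>_def r_def h_def .
qed



lemma cube4:
  fixes u v :: real assumes "u \<ge> 0" "v \<ge> 0"
  shows "(u + v)^3 \<le> 4 * (u^3 + v^3)"
proof -
  have "4 * (u^3 + v^3) - (u + v)^3 = 3 * (u + v) * (u - v)^2"
    by (simp add: algebra_simps power2_eq_square power3_eq_cube)
  moreover have "0 \<le> 3 * (u + v) * (u - v)^2" using assms by simp
  ultimately show ?thesis by linarith
qed

lemma poly1:
  fixes X Y :: real assumes "X \<ge> 0" "Y \<ge> 0"
  shows "0 \<le> 39/10 * X^3 - X^2 * Y + Y^3 / 80"
proof -
  have "39/10 * X^3 - X^2 * Y + Y^3 / 80 = (X - 20/117 * Y)^2 * (39/10 * X + Y / 3) + 9067/3285360 * Y^3"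
    by (simp add: field_simps power2_eq_square power3_eq_cube)
  moreover have "0 \<le> (X - 20/117 * Y)^2 * (39/10 * X + Y / 3)" using assms by simp
  moreover have "0 \<le> 9067/3285360 * Y^3" using assms by simp
  ultimately show ?thesis by linarith
qed

lemma poly2:
  fixes Z Y :: real assumes "Z \<ge> 0" "Y \<ge> 0"
  shows "0 \<le> 72 * Z^3 - Z * Y^2 / 2 + Y^3 / 50"
proof -
  have "72 * Z^3 - Z * Y^2 / 2 + Y^3 / 50 = (Z - Y / 20)^2 * (72 * Z + 34/5 * Y) + 2/5 * Z^2 * Y + 3/1000 * Y^3"
    by (simp add: algebra_simps power2_eq_square power3_eq_cube)
  moreover have "0 \<le> (Z - Y / 20)^2 * (72 * Z + 34/5 * Y)" using assms by simp
  moreover have "0 \<le> 2/5 * Z^2 * Y" using assms by simp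
  moreover have "0 \<le> 3/1000 * Y^3" using assms by simp
  ultimately show ?thesis by linarith
qed

lemma t1: fixes s r p :: real shows "s > 0 \<Longrightarrow> p^3 / s = (p * s)^3 / (s::real)^4"
  by (simp add: power_mult_distrib field_simps eval_nat_numeral)
lemma t2: fixes s r p \<eta> :: real shows "s > 0 \<Longrightarrow> (51/2 * s^3 * r^3 + 16 * p^3 + 12 * \<eta>^3 / s^3) / (1008 * s) = (51/2 * ((r * s^2)^3 / s^4) + 16 * ((p * s)^3 / s^4) + 12 * (\<eta>^3/s^4)) / 1008"
  by (simp add: power_mult_distrib field_simps eval_nat_numeral)
lemma t3: fixes s r p \<eta> :: real shows  "s > 0 \<Longrightarrow> 4 * ((3 * s^2 * r / 2)^3 + \<eta>^3) / s^3 = 27/2 * s^3 * r^3 + 4 * \<eta>^3 / (s::real)^3"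
  by (simp add: power_mult_distrib field_simps eval_nat_numeral)
lemma t4: fixes s r p \<eta> :: real shows "s > 0 \<Longrightarrow> s^2 * r^3 = (r * s^2)^3 / s^4"
  by (simp add: power_mult_distrib field_simps eval_nat_numeral)
lemma t5: fixes s r p \<eta> :: real shows "s > 0 \<Longrightarrow> p^2 * r = (p * s)^2 * (r * s^2) / s^4"
  by (simp add: power_mult_distrib field_simps eval_nat_numeral)
lemma t6: fixes s r p \<eta> :: real shows "s > 0 \<Longrightarrow> \<eta> * r^2 = \<eta> * (r * s^2)^2 / s^4"
  by (simp add: power_mult_distrib field_simps eval_nat_numeral)

lemma q3: fixes s r q \<eta> :: real
  assumes s0: "s > 0" and r0: "r \<ge> 0" and q0: "q \<ge> 0" and e0: "\<eta> \<ge> 0" and qq: "q^2 = \<eta> * r"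
  shows "2 * q^3 \<le> \<eta>^3 / s^3 + s^3 * r^3"
proof -
    have "(2 * q^3)^2 = 4 * (\<eta>^3 / s^3) * (s^3 * r^3)"
    proof -
      have "(2 * q^3)^2 = 4 * (q^2)^3" by (simp add: power2_eq_square power3_eq_cube)
      also have "\<dots> = 4 * (\<eta> * r)^3" using qq by simp
      also have "\<dots> = 4 * (\<eta>^3 / s^3) * (s^3 * r^3)" using s0 by (simp add: power_mult_distrib)
      finally show ?thesis .
    qed
    also have "\<dots> \<le> (\<eta>^3 / s^3 + s^3 * r^3)^2"
    proof -
      have "(\<eta>^3 / s^3 + s^3 * r^3)^2 - 4 * (\<eta>^3 / s^3) * (s^3 * r^3) = (\<eta>^3 / s^3 - s^3 * r^3)^2"
        by (simp add: algebra_simps power2_eq_square)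
      moreover have "0 \<le> (\<eta>^3 / s^3 - s^3 * r^3)^2" by simp
      ultimately show ?thesis by linarith
    qed
    finally have "(2 * q^3)^2 \<le> (\<eta>^3 / s^3 + s^3 * r^3)^2" .
    moreover have "0 \<le> \<eta>^3 / s^3 + s^3 * r^3" using s0 r0 e0 by simp
    ultimately show ?thesis by (rule power2_le_imp_le)
qed

lemma final_alg:
  fixes s r p q \<eta> D \<mu> P Q :: real
  assumes s0: "s > 0" and r0: "r \<ge> 0" and p0: "p \<ge> 0" and q0: "q \<ge> 0" and e0: "\<eta> \<ge> 0"
    and qq: "q^2 = \<eta> * r"
    and hD: "D \<ge> s^2 * r^3 / 12 - p^2 * r - \<eta> * r^2 / 2"
    and hmu: "\<mu> \<le> max P Q" and hP: "P \<le> (p + q + s * r)^3" and hQ: "Q \<le> (3 * s^2 * r / 2 + \<eta>)^3 / s^3"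
  shows "\<mu> / (1008 * s) + s^2 * r^3 / 72 - 4 * p^3 / s - 73 * \<eta>^3 / s^4 \<le> D"
proof -
  have q3: "2 * q^3 \<le> \<eta>^3 / s^3 + s^3 * r^3" by (rule q3[OF s0 r0 q0 e0 qq])
  define B where "B = 51/2 * s^3 * r^3 + 16 * p^3 + 12 * \<eta>^3 / s^3"
  have PB: "(p + q + s * r)^3 \<le> 4 * s^3 * r^3 + 16 * p^3 + 16 * q^3"
  proof -
    have a: "(s * r + (p + q))^3 \<le> 4 * ((s * r)^3 + (p + q)^3)" using s0 r0 p0 q0 by (intro cube4) auto
    have b: "(p + q)^3 \<le> 4 * (p^3 + q^3)" using p0 q0 by (rule cube4)
    have c: "(s * r)^3 = s^3 * r^3" by (simp add: power_mult_distrib)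
    have d: "p + q + s * r = s * r + (p + q)" by simp
    have a': "(s * r + (p + q))^3 \<le> 4 * (s^3 * r^3) + 4 * ((p + q)^3)" using a c by (simp add: distrib_left)
    have b': "4 * ((p + q)^3) \<le> 16 * p^3 + 16 * q^3" using b by simp
    have e: "4 * s^3 * r^3 = 4 * (s^3 * r^3)" by simp
    show ?thesis unfolding d using a' b' e by linarith
  qed
  have QB: "(3 * s^2 * r / 2 + \<eta>)^3 / s^3 \<le> 27/2 * s^3 * r^3 + 4 * \<eta>^3 / s^3"
  proof -
    have "(3 * s^2 * r / 2 + \<eta>)^3 \<le> 4 * ((3 * s^2 * r / 2)^3 + \<eta>^3)" using s0 r0 e0 by (intro cube4) auto
    then have "(3 * s^2 * r / 2 + \<eta>)^3 / s^3 \<le> 4 * ((3 * s^2 * r / 2)^3 + \<eta>^3) / s^3"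
      using s0 by (simp add: divide_right_mono)
    also have "\<dots> = 27/2 * s^3 * r^3 + 4 * \<eta>^3 / s^3" by (rule t3[OF s0])
    finally show ?thesis .
  qed
  have P'0: "0 \<le> (p + q + s * r)^3" using p0 q0 s0 r0 by simp
  have Q'0: "0 \<le> (3 * s^2 * r / 2 + \<eta>)^3 / s^3" using s0 r0 e0 by simp
  have muB: "\<mu> \<le> B"
  proof -
    have "\<mu> \<le> P \<or> \<mu> \<le> Q" using hmu by (simp add: le_max_iff_disj)
    then have "\<mu> \<le> (p + q + s * r)^3 + (3 * s^2 * r / 2 + \<eta>)^3 / s^3"
      using hP hQ P'0 Q'0 by linarith
    then show ?thesis using PB QB q3 unfolding B_def by linarith
  qed
  define X where "X = p * s"
  define Y where "Y = r * s^2"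
  define Z where "Z = \<eta>"
  define A1 where "A1 = X^3 / s^4"
  define A2 where "A2 = Y^3 / s^4"
  define A3 where "A3 = Z^3 / s^4"
  define A4 where "A4 = X^2 * Y / s^4"
  define A5 where "A5 = Z * Y^2 / s^4"
  have X0: "X \<ge> 0" "Y \<ge> 0" "Z \<ge> 0" unfolding X_def Y_def Z_def using p0 s0 r0 e0 by auto
  have i1: "0 \<le> 39/10 * A1 - A4 + A2 / 80"
  proof -
    have "0 \<le> (39/10 * X^3 - X^2 * Y + Y^3 / 80) / s^4" using poly1[OF X0(1,2)] s0 by simp
    also have "\<dots> = 39/10 * A1 - A4 + A2 / 80" unfolding A1_def A2_def A4_def using s0 by (simp add: field_simps)
    finally show ?thesis .
  qed
  have i2: "0 \<le> 72 * A3 - A5 / 2 + A2 / 50"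
  proof -
    have "0 \<le> (72 * Z^3 - Z * Y^2 / 2 + Y^3 / 50) / s^4" using poly2[OF X0(3,2)] s0 by simp
    also have "\<dots> = 72 * A3 - A5 / 2 + A2 / 50" unfolding A3_def A2_def A5_def using s0 by (simp add: field_simps)
    finally show ?thesis .
  qed
  have A1nn: "A1 \<ge> 0" "A2 \<ge> 0" "A3 \<ge> 0" unfolding A1_def A2_def A3_def using X0 s0 by auto
  have e1: "s^2 * r^3 = A2" unfolding A2_def Y_def by (rule t4[OF s0])
  have e2: "p^2 * r = A4" unfolding A4_def X_def Y_def by (rule t5[OF s0])
  have e3: "\<eta> * r^2 = A5" unfolding A5_def Z_def Y_def by (rule t6[OF s0])
  have e4: "p^3 / s = A1" unfolding A1_def X_def by (rule t1[OF s0])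
  have e5: "\<eta>^3 / s^4 = A3" unfolding A3_def Z_def by simp
  have e6: "B / (1008 * s) = (51/2 * A2 + 16 * A1 + 12 * A3) / 1008"
    unfolding B_def A1_def A2_def A3_def X_def Y_def Z_def by (rule t2[OF s0])
  have "\<mu> / (1008 * s) \<le> B / (1008 * s)" using muB s0 by (simp add: divide_right_mono)
  then have m1: "\<mu> / (1008 * s) \<le> (51/2 * A2 + 16 * A1 + 12 * A3) / 1008" using e6 by simp
  have g1: "4 * p^3 / s = 4 * A1" using e4 by simp
  have g2: "73 * \<eta>^3 / s^4 = 73 * A3" using e5 by simp
  have g3: "s^2 * r^3 / 72 = A2 / 72" using e1 by simp
  have g4: "D \<ge> A2 / 12 - A4 - A5 / 2" using hD e1 e2 e3 by simp
  have m2: "\<mu> / (1008 * s) * 1008 \<le> 51/2 * A2 + 16 * A1 + 12 * A3" using m1 by simp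
  show ?thesis unfolding g1 g2 g3 using m2 g4 i1 i2 A1nn by linarith
qed



lemma pow32: fixes x :: real assumes "x \<ge> 0" shows "x powr (3/2) = sqrt x ^ 3"
proof -
  have "sqrt x ^ 3 = (x powr (1/2)) powr (of_nat 3)"
    using assms by (simp add: powr_half_sqrt powr_realpow')
  also have "\<dots> = x powr (3/2)" by (simp add: powr_powr)
  finally show ?thesis by simp
qed

theorem mainTheorem1:
  fixes f :: "real^'n \<Rightarrow> real"
    and gradf :: "real^'n \<Rightarrow> real^'n"
    and Hf :: "real^'n \<Rightarrow> real^'n^'n"
    and L M :: real
    and x g xp :: "real^'n"
    and H :: "real^'n^'n"
  assumes f_deriv: "\<And>y. (f has_derivative (\<lambda>h. gradf y \<bullet> h)) (at y)"
    and grad_deriv: "\<And>y. (gradf has_derivative (\<lambda>h. Hf y *v h)) (at y)"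
    and hess_lip: "\<And>y z. spec_norm (Hf y - Hf z) \<le> L * norm (y - z)"
    and H_sym: "symmetric_matrix H"
    and M_pos: "M > 0"
    and M_ge: "M \<ge> L"
    and xp_min: "\<And>y. Omega M g H xp x \<le> Omega M g H y x"
  shows "f x - f xp \<ge> mu gradf Hf M xp / (1008 * sqrt M) + M * norm (x - xp) ^ 3 / 72
           - 4 * norm (gradf x - g) powr (3/2) / sqrt M
           - 73 * spec_norm (Hf x - H) ^ 3 / M\<^sup>2"
proof -
  have sym: "symmetric_matrix (Hf y)" for y by (rule hess_sym[OF f_deriv grad_deriv])
  have L0: "L \<ge> 0" by (rule L_nonneg[OF sym hess_lip])
  define h where "h = xp - x"
  define r where "r = norm h"
  have r0: "r \<ge> 0" unfolding r_def by simp
  have rx: "norm (x - xp) = r" unfolding r_def h_def by (simp add: norm_minus_commute)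
  have xph: "xp = x + h" unfolding h_def by simp
  define dg where "dg = gradf x - g"
  define a where "a = norm dg"
  define dH where "dH = Hf x - H"
  define \<eta> where "\<eta> = spec_norm dH"
  have dHsym: "symmetric_matrix dH" unfolding dH_def by (rule sym_diff[OF sym H_sym])
  have e0: "\<eta> \<ge> 0" unfolding \<eta>_def by (rule spec_nonneg[OF dHsym])
  have a0: "a \<ge> 0" unfolding a_def by simp
  have F1: "g + H *v h + (M * r / 2) *\<^sub>R h = 0"
    using opt_conds(1)[OF H_sym M_pos xp_min] unfolding h_def r_def .
  have F2: "0 \<le> z \<bullet> (H *v z) + (M * r / 2) * (norm z)^2" for z
    using opt_conds(2)[OF H_sym M_pos xp_min] unfolding h_def[symmetric] r_def[symmetric] .
  have E1: "f x - f xp \<ge> M * r^3 / 12 - a * r - \<eta> * r^2 / 2"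
  proof -
    have T: "f xp \<le> f x + gradf x \<bullet> h + 1/2 * (h \<bullet> (Hf x *v h)) + L / 6 * r^3"
      unfolding xph r_def by (rule taylor_f[OF f_deriv grad_deriv sym hess_lip])
    have a1: "gradf x \<bullet> h = g \<bullet> h + dg \<bullet> h" unfolding dg_def by (simp add: inner_diff_left)
    have a2: "h \<bullet> (Hf x *v h) = h \<bullet> (H *v h) + h \<bullet> (dH *v h)"
      unfolding dH_def by (simp add: matrix_vector_mult_diff_rdistrib inner_diff_right)
    define K where "K = M * r^3"
    have a3: "g \<bullet> h + h \<bullet> (H *v h) + K / 2 = 0"
    proof -
      have "(g + H *v h + (M * r / 2) *\<^sub>R h) \<bullet> h = 0" using F1 by simp
      then show ?thesis unfolding r_def K_def
        by (simp add: inner_add_left inner_commute power2_norm_eq_inner[symmetric] power2_eq_square power3_eq_cube algebra_simps)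
    qed
    have a4: "0 \<le> h \<bullet> (H *v h) + K / 2"
      using F2[of h] unfolding r_def K_def by (simp add: power2_eq_square power3_eq_cube algebra_simps)
    have a5: "dg \<bullet> h \<le> a * r" unfolding a_def r_def by (rule norm_cauchy_schwarz)
    have a6: "h \<bullet> (dH *v h) \<le> \<eta> * r^2" using quad_abs[OF dHsym, of h] unfolding \<eta>_def r_def by simp
    have a7: "L / 6 * r^3 \<le> K / 6" unfolding K_def using M_ge r0 by (simp add: mult_right_mono)
    have "K / 12 - a * r - \<eta> * r^2 / 2 \<le> f x - f xp" using T a1 a2 a3 a4 a5 a6 a7 by linarith
    then show ?thesis unfolding K_def .
  qed
  have E2: "norm (gradf xp) \<le> a + \<eta> * r + M * r^2"
  proof -
    define e where "e = gradf xp - gradf x - Hf x *v h"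
    have ne: "norm e \<le> L / 2 * r^2" unfolding e_def xph r_def by (rule taylor_grad[OF grad_deriv sym hess_lip])
    have id: "gradf xp = dg + (dH *v h - (M * r / 2) *\<^sub>R h + e)"
    proof -
      have "gradf xp = gradf xp - (g + H *v h + (M * r / 2) *\<^sub>R h)" using F1 by simp
      then show ?thesis unfolding e_def dg_def dH_def by (simp add: algebra_simps)
    qed
    have "norm (gradf xp) \<le> norm dg + (norm (dH *v h) + norm ((M * r / 2) *\<^sub>R h) + norm e)"
      unfolding id by (intro order_trans[OF norm_triangle_ineq] add_left_mono order_trans[OF norm_triangle_ineq] add_right_mono norm_triangle_ineq4)
    moreover have "norm (dH *v h) \<le> \<eta> * r" unfolding \<eta>_def r_def by (rule op_bound[OF dHsym])
    moreover have "norm ((M * r / 2) *\<^sub>R h) = M * r^2 / 2" using M_pos r0 unfolding r_def by (simp add: power2_eq_square)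
    moreover have "L / 2 * r^2 \<le> M / 2 * r^2" using M_ge by (simp add: mult_right_mono)
    moreover have "M / 2 * r^2 = M * r^2 / 2" by simp
    ultimately show ?thesis using ne unfolding a_def by linarith
  qed
  have E3: "- lambda_min (Hf xp) \<le> 3 * M * r / 2 + \<eta>"
  proof -
    define l where "l = lambda_min (Hf xp)"
    have "l \<in> eigenvalues (Hf xp)" unfolding l_def by (rule eig_props(3)[OF sym])
    then obtain v where v0: "v \<noteq> 0" and ev: "Hf xp *v v = l *\<^sub>R v" unfolding eigenvalues_def by auto
    have nv: "(norm v)^2 > 0" using v0 by simp
    have q1: "v \<bullet> (Hf xp *v v) = l * (norm v)^2" unfolding ev by (simp add: power2_norm_eq_inner)
    have q2: "v \<bullet> (Hf xp *v v) = v \<bullet> (H *v v) + v \<bullet> (dH *v v) + v \<bullet> ((Hf xp - Hf x) *v v)"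
      unfolding dH_def by (simp add: matrix_vector_mult_diff_rdistrib inner_diff_right)
    have q3: "- (\<eta> * (norm v)^2) \<le> v \<bullet> (dH *v v)" using quad_abs[OF dHsym, of v] unfolding \<eta>_def by linarith
    have q4: "- (L * r * (norm v)^2) \<le> v \<bullet> ((Hf xp - Hf x) *v v)"
    proof -
      have "\<bar>v \<bullet> ((Hf xp - Hf x) *v v)\<bar> \<le> spec_norm (Hf xp - Hf x) * (norm v)^2"
        by (rule quad_abs[OF sym_diff[OF sym sym]])
      also have "\<dots> \<le> L * r * (norm v)^2" using hess_lip[of xp x] unfolding r_def h_def by (simp add: mult_right_mono)
      finally show ?thesis by linarith
    qed
    have q5: "- (M * r / 2 * (norm v)^2) \<le> v \<bullet> (H *v v)" using F2[of v] by linarith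
    have q6: "L * r * (norm v)^2 \<le> M * r * (norm v)^2" using M_ge r0 by (simp add: mult_right_mono)
    have q7: "M * r / 2 * (norm v)^2 = (M * r * (norm v)^2) / 2" by simp
    have q8: "(- l) * (norm v)^2 = - (l * (norm v)^2)" by simp
    have q9: "(3 * M * r / 2 + \<eta>) * (norm v)^2 = 3 * (M * r * (norm v)^2) / 2 + \<eta> * (norm v)^2"
      by (simp add: algebra_simps)
    have "(- l) * (norm v)^2 \<le> (3 * M * r / 2 + \<eta>) * (norm v)^2"
      unfolding q8 q9 using q1 q2 q3 q4 q5 q6 q7 by linarith
    then have "- l \<le> 3 * M * r / 2 + \<eta>" by (rule mult_right_le_imp_le) (rule nv)
    then show ?thesis unfolding l_def .
  qed
  define s where "s = sqrt M"
  have s0: "s > 0" unfolding s_def using M_pos by simp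
  have Ms: "M = s^2" unfolding s_def using M_pos by simp
  define p where "p = sqrt a"
  define q where "q = sqrt (\<eta> * r)"
  have p0: "p \<ge> 0" unfolding p_def using a0 by simp
  have q0: "q \<ge> 0" unfolding q_def using e0 r0 by simp
  have qq: "q^2 = \<eta> * r" unfolding q_def using e0 r0 by simp
  have pa: "p^2 = a" unfolding p_def using a0 by simp
  have hD: "f x - f xp \<ge> s^2 * r^3 / 12 - p^2 * r - \<eta> * r^2 / 2" using E1 unfolding pa Ms .
  define P where "P = norm (gradf xp) powr (3/2)"
  define Q where "Q = (- lambda_min (Hf xp))^3 / M powr (3/2)"
  have muPQ: "mu gradf Hf M xp = max P Q" unfolding mu_def P_def Q_def ..
  have hP: "P \<le> (p + q + s * r)^3"
  proof -
    have "P = sqrt (norm (gradf xp)) ^ 3" unfolding P_def by (rule pow32) simp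
    also have "\<dots> \<le> (p + q + s * r)^3"
    proof (rule power_mono)
      have "sqrt (norm (gradf xp)) \<le> sqrt (a + \<eta> * r + M * r^2)" using E2 by simp
      also have "\<dots> \<le> sqrt (a + \<eta> * r) + sqrt (M * r^2)"
        using a0 e0 r0 M_pos by (intro sqrt_add_le_add_sqrt) auto
      also have "\<dots> \<le> sqrt a + sqrt (\<eta> * r) + sqrt (M * r^2)"
        using a0 e0 r0 by (simp add: sqrt_add_le_add_sqrt)
      also have "sqrt (M * r^2) = s * r" unfolding s_def using r0 by (simp add: real_sqrt_mult)
      finally show "sqrt (norm (gradf xp)) \<le> p + q + s * r" unfolding p_def q_def .
    qed simp
    finally show ?thesis .
  qed
  have hQ: "Q \<le> (3 * s^2 * r / 2 + \<eta>)^3 / s^3"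
  proof -
    have Mp: "M powr (3/2) = s^3" unfolding s_def using M_pos by (simp add: pow32)
    have "(- lambda_min (Hf xp))^3 \<le> (3 * s^2 * r / 2 + \<eta>)^3"
      using E3 unfolding Ms by (intro power_mono_odd) auto
    then show ?thesis unfolding Q_def Mp by (rule divide_right_mono) (use s0 in simp)
  qed
  have fin: "mu gradf Hf M xp / (1008 * s) + s^2 * r^3 / 72 - 4 * p^3 / s - 73 * \<eta>^3 / s^4 \<le> f x - f xp"
    by (rule final_alg[OF s0 r0 p0 q0 e0 qq hD _ hP hQ]) (simp add: muPQ)
  have c1: "norm (gradf x - g) powr (3/2) = p^3" unfolding p_def a_def dg_def by (rule pow32) simp
  have c2: "M\<^sup>2 = s^4" unfolding Ms by simp
  show ?thesis unfolding rx c1 c2 \<eta>_def[symmetric] dH_def[symmetric] s_def[symmetric]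
    using fin unfolding Ms by simp
qed

end
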